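(* Let $\pi=(\sigma,\mathbf z)\in\mathsf{G}_{r,n}$ and let $\mathbf f=f(\pi)$ be its minimum sequence. Then $\phi(\pi)\in\mathsf{G}_{r,n,\mathbf f}$, where $\phi=(\text{B-code})^{-1}\circ(\text{A-code})$.
   Context: $\mathsf{G}_{r,n}=C_r\wr\mathfrak S_n$: pairs $(\sigma,\mathbf z)$, $\sigma\in\mathfrak S_n$, $\mathbf z\in(\mathbb Z/r)^n$, written $\sigma_1^{[z_1]}\cdots\sigma_n^{[z_n]}$ (colors in $\{0,\dots,r-1\}$, read mod $r$). For a nondecreasing integer sequence $\mathbf f=(f_1,\dots,f_n)$ with $1\le f_1\le\cdots\le f_n\le n$, $\mathsf{G}_{r,n,\mathbf f}=\{(\sigma,\mathbf z)\in\mathsf{G}_{r,n}:\sigma(i)\le f_i\ \forall i\}$. The minimum sequence $f(\pi)$ of $\pi=(\sigma,\mathbf z)$ is the componentwise smallest such $\mathbf f$ with $\pi\in\mathsf{G}_{r,n,\mathbf f}$, i.e. $f(\pi)_i=\max\{\sigma_1,\dots,\sigma_i\}$. $\mathsf{CS}_{r,n}=\{(c_1^{[e_1]},\dots,c_n^{[e_n]}):1\le c_i\le i,\ 0\le e_i<r\}$. A-code: $\pi^{(n)}=\pi$; for $j=n,\dots,1$, if base value $j$ is at position $p$ of $\pi^{(j)}$ with color $t$, set $c_j=p,e_j=t$ and delete that letter to get $\pi^{(j-1)}$; A-code$(\pi)=(c_j^{[e_j]})_j$. B-code: $\pi^{(n)}=\pi$; for $j=n,\dots,1$, writing $\pi^{(j)}=\tau_1^{[y_1]}\cdots\tau_j^{[y_j]}$,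 $c_j$ = position of base value $j$, $z$ its color, $e_j\equiv-z\pmod r$ in $\{0,\dots,r-1\}$; if $c_j<j$, $\pi^{(j-1)}$ is obtained by replacing the letter at position $c_j$ by $\tau_j^{[y_j-e_j]}$ and deleting the last letter, and if $c_j=j$ by deleting the last letter; B-code$(\pi)=(c_j^{[e_j]})_j$. Both codes are bijections $\mathsf{G}_{r,n}\to\mathsf{CS}_{r,n}$. *)

theory Defs
  imports Main
begin

text \<open>A colored permutation \<open>\<sigma>\<^sub>1\<^sup>[z\<^sub>1] ... \<sigma>\<^sub>n\<^sup>[z\<^sub>n]\<close> is represented as the list
  \<open>[(\<sigma>\<^sub>1,z\<^sub>1), ..., (\<sigma>\<^sub>n,z\<^sub>n)]\<close>; list index \<open>i\<close> (0-based) is position \<open>i+1\<close>.\<close>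

type_synonym cword = "(nat \<times> nat) list"

definition G :: "nat \<Rightarrow> nat \<Rightarrow> cword set" where
  "G r n = {w. length w = n \<and> distinct (map fst w) \<and> set (map fst w) = {1..n}
                \<and> (\<forall>x\<in>set w. snd x < r)}"

text \<open>Colored sequences \<open>CS_{r,n}\<close>: the j-th entry (1-based) is \<open>(c_j, e_j)\<close>.\<close>
definition CS :: "nat \<Rightarrow> nat \<Rightarrow> cword set" where
  "CS r n = {c. length c = n \<and> (\<forall>j<n. 1 \<le> fst (c!j) \<and> fst (c!j) \<le> Suc j \<and> snd (c!j) < r)}"

definition pos :: "nat \<Rightarrow> cword \<Rightarrow> nat" where
  "pos v w = (LEAST i. i < length w \<and> fst (w!i) = v)"

text \<open>A-code: called with \<open>j = length w\<close>; the result lists \<open>c_1^{[e_1]},...,c_j^{[e_j]}\<close>.\<close>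
fun acode :: "nat \<Rightarrow> cword \<Rightarrow> cword" where
  "acode 0 w = []"
| "acode (Suc j) w =
     (let p = pos (Suc j) w
      in acode j (take p w @ drop (Suc p) w) @ [(Suc p, snd (w!p))])"

text \<open>Position \<open>c_j = Suc p\<close>; \<open>e_j \<equiv> -z (mod r)\<close>; if \<open>c_j < j\<close> the letter at
  position \<open>c_j\<close> is replaced by \<open>\<tau>_j^{[y_j - e_j]}\<close> and the last letter is deleted.\<close>
fun bcode :: "nat \<Rightarrow> nat \<Rightarrow> cword \<Rightarrow> cword" where
  "bcode r 0 w = []"
| "bcode r (Suc j) w =
     (let p = pos (Suc j) w;
          e = nat ((- int (snd (w!p))) mod int r);
          lst = last w;
          w' = (if p < j
                then (butlast w)[p := (fst lst, nat ((int (snd lst) - int e) mod int r))]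
                else butlast w)
      in bcode r j w' @ [(Suc p, e)])"

definition Acode :: "nat \<Rightarrow> cword \<Rightarrow> cword" where
  "Acode n w = acode n w"

definition Bcode :: "nat \<Rightarrow> nat \<Rightarrow> cword \<Rightarrow> cword" where
  "Bcode r n w = bcode r n w"

definition phi :: "nat \<Rightarrow> nat \<Rightarrow> cword \<Rightarrow> cword" where
  "phi r n w = inv_into (G r n) (Bcode r n) (Acode n w)"

definition Gf :: "nat \<Rightarrow> nat \<Rightarrow> (nat \<Rightarrow> nat) \<Rightarrow> cword set" where
  "Gf r n f = {w \<in> G r n. \<forall>i\<in>{1..n}. fst (w!(i - 1)) \<le> f i}"

definition minseq :: "cword \<Rightarrow> nat \<Rightarrow> nat" where
  "minseq w i = Max (fst ` set (take i w))"

end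

theory Submission
  imports Defs
begin

lemma G_iff: "w \<in> G r n \<longleftrightarrow> length w = n \<and> set (map fst w) = {1..n} \<and> (\<forall>x\<in>set w. snd x < r)"
proof
  assume "w \<in> G r n" thus "length w = n \<and> set (map fst w) = {1..n} \<and> (\<forall>x\<in>set w. snd x < r)"
    by (simp add: G_def)
next
  assume h: "length w = n \<and> set (map fst w) = {1..n} \<and> (\<forall>x\<in>set w. snd x < r)"
  hence "card (set (map fst w)) = length (map fst w)" by simp
  hence "distinct (map fst w)" by (rule card_distinct)
  thus "w \<in> G r n" using h by (simp add: G_def)
qed

lemma G_distinct: "w \<in> G r n \<Longrightarrow> distinct (map fst w)" by (simp add: G_def)

lemma pos_eq:
  assumes "distinct (map fst w)" "i < length w" "fst (w!i) = v"
  shows "pos v w = i"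
  unfolding pos_def
proof (rule Least_equality)
  show "i < length w \<and> fst (w ! i) = v" using assms by simp
next
  fix k assume "k < length w \<and> fst (w ! k) = v"
  hence "map fst w ! k = map fst w ! i" "k < length (map fst w)" "i < length (map fst w)"
    using assms by auto
  hence "k = i" using assms(1) nth_eq_iff_index_eq by blast
  thus "i \<le> k" by simp
qed

lemma pos_in:
  assumes "v \<in> fst ` set w"
  shows "pos v w < length w \<and> fst (w ! pos v w) = v"
proof -
  obtain x where "x \<in> set w" "fst x = v" using assms by auto
  then obtain i where "i < length w" "fst (w!i) = v" by (auto simp: in_set_conv_nth)
  hence "\<exists>i. i < length w \<and> fst (w!i) = v" by blast
  thus ?thesis unfolding pos_def by (rule LeastI_ex)
qed

lemma L1: "(z::nat) < r \<Longrightarrow> (r - nat ((- int z) mod int r)) mod r = z"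
proof (cases "z = 0")
  case True thus ?thesis by simp
next
  case False
  assume "z < r"
  hence "(- int z) mod int r = int r - int z" using False
    by (simp add: zmod_zminus1_eq_if)
  thus ?thesis using \<open>z < r\<close> by simp
qed

lemma L2: "(e::nat) < r \<Longrightarrow> nat ((- int ((r - e) mod r)) mod int r) = e"
proof (cases "e = 0")
  case True thus ?thesis by simp
next
  case False
  assume "e < r"
  hence "(r - e) mod r = r - e" using False by simp
  moreover have "(- int (r - e)) mod int r = int e" using False \<open>e < r\<close>
    by (simp add: zmod_zminus1_eq_if of_nat_diff)
  ultimately show ?thesis by simp
qed

lemma L3: "(y::nat) < r \<Longrightarrow> nat ((int ((y + e) mod r) - int e) mod int r) = y"
proof -
  assume "y < r"
  have "(int ((y + e) mod r) - int e) mod int r = (int (y+e) - int e) mod int r"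
    by (simp add: mod_diff_left_eq zmod_int)
  also have "\<dots> = int y" using \<open>y < r\<close> by simp
  finally show ?thesis by simp
qed

lemma L4: "(y::nat) < r \<Longrightarrow> (nat ((int y - int e) mod int r) + e) mod r = y"
proof -
  assume "y < r"
  hence rp: "0 < r" by simp
  have "int ((nat ((int y - int e) mod int r) + e) mod r)
        = ((int y - int e) mod int r + int e) mod int r"
    using rp by (simp add: zmod_int)
  also have "\<dots> = int y" using \<open>y < r\<close> by (simp add: mod_add_left_eq)
  finally show ?thesis by simp
qed


definition bstep :: "nat \<Rightarrow> nat \<Rightarrow> nat \<times> nat \<Rightarrow> cword \<Rightarrow> cword" where
  "bstep r j ce t = (if fst ce = j then t @ [(j, (r - snd ce) mod r)]
     else t[fst ce - 1 := (j, (r - snd ce) mod r)] @ [(fst (t!(fst ce - 1)), (snd (t!(fst ce - 1)) + snd ce) mod r)])"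

fun bd :: "nat \<Rightarrow> cword \<Rightarrow> cword" where
  "bd r [] = []"
| "bd r (x # xs) = bstep r (Suc (length xs)) x (bd r xs)"

lemma stepA:
  assumes t: "t \<in> G r j" and c: "1 \<le> c" "c \<le> Suc j" and e: "e < r"
  shows "bstep r (Suc j) (c, e) t \<in> G r (Suc j) \<and>
         bcode r (Suc j) (bstep r (Suc j) (c, e) t) = bcode r j t @ [(c, e)]"
proof (cases "c = Suc j")
  case True
  let ?z = "(r - e) mod r"
  have rp: "0 < r" using e by simp
  have tau: "bstep r (Suc j) (c, e) t = t @ [(Suc j, ?z)]" using True by (simp add: bstep_def)
  have lt: "length t = j" and st: "set (map fst t) = {1..j}" and ct: "\<forall>x\<in>set t. snd x < r"
    using t by (auto simp: G_iff)
  have G1: "t @ [(Suc j, ?z)] \<in> G r (Suc j)"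
    unfolding G_iff using lt st ct rp by (auto simp: image_Un)
  have "pos (Suc j) (t @ [(Suc j, ?z)]) = j"
    by (rule pos_eq) (use G_distinct[OF G1] lt in auto)
  hence "bcode r (Suc j) (t @ [(Suc j, ?z)]) = bcode r j t @ [(Suc j, e)]"
    using lt L2[OF e] by (simp add: Let_def nth_append)
  thus ?thesis using tau G1 True by simp
next
  case False
  let ?z = "(r - e) mod r"
  let ?a = "t!(c-1)"
  have rp: "0 < r" using e by simp
  have lt: "length t = j" and st: "set (map fst t) = {1..j}" and ct: "\<forall>x\<in>set t. snd x < r"
    and dt: "distinct (map fst t)"
    using t by (auto simp: G_iff G_def)
  have cl: "c - 1 < j" using c False by simp
  have tau: "bstep r (Suc j) (c, e) t = t[c-1 := (Suc j, ?z)] @ [(fst ?a, (snd ?a + e) mod r)]"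
    using False by (simp add: bstep_def)
  have ain: "?a \<in> set t" using cl lt by simp
  have fa: "fst ?a \<in> {1..j}" using ain st by auto
  have "set (map fst (t[c-1 := (Suc j, ?z)])) = insert (Suc j) ({1..j} - {fst ?a})"
  proof -
    have "map fst (t[c-1 := (Suc j, ?z)]) = (map fst t)[c-1 := Suc j]" by (simp add: map_update)
    moreover have "set ((map fst t)[c-1 := Suc j]) = insert (Suc j) (set (map fst t) - {map fst t ! (c-1)})"
      using dt cl lt by (simp add: set_update_distinct)
    ultimately show ?thesis using st cl lt by simp
  qed
  hence sset: "set (map fst (t[c-1 := (Suc j, ?z)] @ [(fst ?a, (snd ?a + e) mod r)])) = {1..Suc j}"
    using fa by auto
  have cset: "\<forall>x\<in>set (t[c-1 := (Suc j, ?z)] @ [(fst ?a, (snd ?a + e) mod r)]). snd x < r"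
    using ct rp by (auto dest: set_update_subset_insert[THEN subsetD])
  have G1: "t[c-1 := (Suc j, ?z)] @ [(fst ?a, (snd ?a + e) mod r)] \<in> G r (Suc j)"
    unfolding G_iff using sset cset lt by simp
  have p: "pos (Suc j) (t[c-1 := (Suc j, ?z)] @ [(fst ?a, (snd ?a + e) mod r)]) = c - 1"
    by (rule pos_eq) (use G_distinct[OF G1] lt cl in \<open>auto simp: nth_append\<close>)
  have col: "(t[c-1 := (Suc j, ?z)] @ [(fst ?a, (snd ?a + e) mod r)]) ! (c-1) = (Suc j, ?z)"
    using cl lt by (simp add: nth_append)
  have sa: "snd ?a < r" using ct ain by blast
  have bk: "(t[c-1 := (Suc j, ?z)])[c-1 := (fst ?a, nat ((int ((snd ?a + e) mod r) - int (nat ((- int ?z) mod int r))) mod int r))] = t"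
    using L2[OF e] L3[OF sa] by simp
  have "bcode r (Suc j) (t[c-1 := (Suc j, ?z)] @ [(fst ?a, (snd ?a + e) mod r)]) = bcode r j t @ [(c, e)]"
    using p col cl lt bk L2[OF e] c by (simp add: Let_def)
  thus ?thesis using tau G1 by simp
qed


lemma recon:
  assumes t: "t \<in> G r (Suc j)"
  shows "\<exists>w' p e. w' \<in> G r j \<and> t = bstep r (Suc j) (Suc p, e) w' \<and>
           bcode r (Suc j) t = bcode r j w' @ [(Suc p, e)]"
proof -
  have lt: "length t = Suc j" and st: "set (map fst t) = {1..Suc j}" and ct: "\<forall>x\<in>set t. snd x < r"
    and dt: "distinct (map fst t)"
    using t by (auto simp: G_iff G_def)
  define p where "p = pos (Suc j) t"
  define z where "z = snd (t!p)"
  define e where "e = nat ((- int z) mod int r)"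
  define l where "l = last t"
  define B where "B = butlast t"
  define w' where "w' = (if p < j then B[p := (fst l, nat ((int (snd l) - int e) mod int r))] else B)"
  have "Suc j \<in> set (map fst t)" using st by simp
  hence "Suc j \<in> fst ` set t" by simp
  hence "pos (Suc j) t < length t \<and> fst (t ! pos (Suc j) t) = Suc j" by (rule pos_in)
  hence pl: "p < Suc j" and fp: "fst (t!p) = Suc j" using lt unfolding p_def by auto
  have ne: "t \<noteq> []" using lt by auto
  have tB: "t = B @ [l]" unfolding B_def l_def using ne by simp
  have lB: "length B = j" unfolding B_def using lt by simp
  have ln: "l = t!j" unfolding l_def using ne lt by (simp add: last_conv_nth)
  have zr: "z < r" unfolding z_def using ct pl lt by auto
  have rp: "0 < r" using zr by simp
  have dB: "distinct (map fst t) = (distinct (map fst B) \<and> fst l \<notin> set (map fst B))"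
    by (subst tB) auto
  hence dB1: "distinct (map fst B)" and dB2: "fst l \<notin> set (map fst B)" using dt by auto
  have stB: "set (map fst t) = insert (fst l) (set (map fst B))" by (subst tB) simp
  have sB: "set (map fst B) = {1..Suc j} - {fst l}" using st dB2 stB by (metis Diff_insert_absorb)
  have cB: "\<forall>x\<in>set B. snd x < r" using ct by (subst (asm) tB) auto
  have bc: "bcode r (Suc j) t = bcode r j w' @ [(Suc p, e)]"
    unfolding w'_def e_def z_def p_def l_def B_def by (simp add: Let_def)
  show ?thesis
  proof (cases "p = j")
    case True
    have fl: "fst l = Suc j" using fp True ln by simp
    have wB: "w' = B" using True unfolding w'_def by simp
    have G1: "w' \<in> G r j" unfolding G_iff wB using lB sB cB fl by auto
    have "t = B @ [(Suc j, z)]" using tB fl ln True z_def by (metis prod.collapse)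
    hence "t = bstep r (Suc j) (Suc p, e) w'"
      using True L1[OF zr] wB unfolding e_def by (simp add: bstep_def)
    thus ?thesis using G1 bc by blast
  next
    case False
    hence pj: "p < j" using pl by simp
    define y' where "y' = nat ((int (snd l) - int e) mod int r)"
    have ww: "w' = B[p := (fst l, y')]" unfolding w'_def y'_def using pj by simp
    have Bp: "B!p = t!p" using tB pj lB by (simp add: nth_append)
    have "B!p \<in> set B" using pj lB by simp
    hence mB0: "fst (B!p) \<in> set (map fst B)" by simp
    note mB = mB0
    have flj: "fst l \<noteq> Suc j"
    proof
      assume "fst l = Suc j"
      hence "fst l = fst (B!p)" using Bp fp by simp
      hence "fst l \<in> set (map fst B)" using mB by (simp only:)
      thus False using dB2 by (rule notE[rotated])
    qed
    have "fst l \<in> {1..Suc j}" using st stB by blast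
    hence fl1: "fst l \<in> {1..j}" using flj by auto
    have "set (map fst w') = insert (fst l) (set (map fst B) - {map fst B ! p})"
      unfolding ww using dB1 pj lB by (simp add: map_update set_update_distinct)
    hence sw: "set (map fst w') = {1..j}" using sB Bp fp pj lB fl1 by auto
    have ze: "(r - e) mod r = z" using L1[OF zr] unfolding e_def by simp
    have y'r: "y' < r" unfolding y'_def using rp by (simp add: nat_less_iff)
    have cw: "\<forall>x\<in>set w'. snd x < r" unfolding ww using cB y'r set_update_subset_insert[of B p "(fst l, y')"]
      by auto
    have G1: "w' \<in> G r j" unfolding G_iff using sw cw ww lB by simp
    have sl: "snd l < r" using ct ne unfolding l_def by simp
    have "bstep r (Suc j) (Suc p, e) w' = (B[p := (fst l, y')])[p := (Suc j, (r - e) mod r)] @ [(fst l, (y' + e) mod r)]"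
      using pj lB unfolding ww by (simp add: bstep_def)
    also have "\<dots> = B[p := (Suc j, z)] @ [l]"
      using ze L4[OF sl, of e] unfolding y'_def by simp
    also have "(Suc j, z) = B!p" using Bp fp by (simp add: z_def prod_eq_iff)
    also have "B[p := B!p] @ [l] = t" using tB by simp
    finally have "t = bstep r (Suc j) (Suc p, e) w'" by simp
    thus ?thesis using G1 bc by blast
  qed
qed


lemma bcode_len: "length (bcode r n w) = n"
  by (induction n arbitrary: w) (simp_all add: Let_def)

lemma acode_len: "length (acode n w) = n"
  by (induction n arbitrary: w) (simp_all add: Let_def)

lemma bd_ok:
  assumes "1 \<le> r"
  shows "c \<in> CS r (length c) \<Longrightarrow> bd r (rev c) \<in> G r (length c) \<and> bcode r (length c) (bd r (rev c)) = c"
proof (induction c rule: rev_induct)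
  case Nil
  show ?case by (simp add: G_iff)
next
  case (snoc x xs)
  have P: "\<And>k. k < Suc (length xs) \<Longrightarrow> 1 \<le> fst ((xs@[x])!k) \<and> fst ((xs@[x])!k) \<le> Suc k \<and> snd ((xs@[x])!k) < r"
    using snoc.prems unfolding CS_def by simp
  have "\<forall>k<length xs. 1 \<le> fst (xs!k) \<and> fst (xs!k) \<le> Suc k \<and> snd (xs!k) < r"
  proof (intro allI impI)
    fix k assume k: "k < length xs"
    have "(xs@[x])!k = xs!k" using k by (simp add: nth_append)
    thus "1 \<le> fst (xs!k) \<and> fst (xs!k) \<le> Suc k \<and> snd (xs!k) < r" using P[of k] k by simp
  qed
  hence "xs \<in> CS r (length xs)" unfolding CS_def by simp
  hence IH: "bd r (rev xs) \<in> G r (length xs)" "bcode r (length xs) (bd r (rev xs)) = xs"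
    using snoc.IH by auto
  have x: "1 \<le> fst x" "fst x \<le> Suc (length xs)" "snd x < r"
    using P[of "length xs"] by simp_all
  have e: "bd r (rev (xs @ [x])) = bstep r (Suc (length xs)) (fst x, snd x) (bd r (rev xs))" by simp
  show ?case using stepA[OF IH(1) x] IH(2) e by simp
qed

lemma bd_inj: "t \<in> G r n \<Longrightarrow> bd r (rev (bcode r n t)) = t"
proof (induction n arbitrary: t)
  case 0
  thus ?case by (simp add: G_iff)
next
  case (Suc j)
  obtain w' p e where w: "w' \<in> G r j" "t = bstep r (Suc j) (Suc p, e) w'"
    "bcode r (Suc j) t = bcode r j w' @ [(Suc p, e)]"
    using recon[OF Suc.prems] by blast
  show ?case using w Suc.IH[OF w(1)] by (simp add: bcode_len)
qed

lemma set_del_nth: "distinct xs \<Longrightarrow> p < length xs \<Longrightarrow> set (take p xs @ drop (Suc p) xs) = set xs - {xs!p}"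
proof -
  assume d: "distinct xs" and p: "p < length xs"
  have xs: "xs = take p xs @ xs!p # drop (Suc p) xs" using p by (simp add: id_take_nth_drop)
  hence "distinct (take p xs @ xs!p # drop (Suc p) xs)" using d by simp
  hence "xs!p \<notin> set (take p xs @ drop (Suc p) xs)" by auto
  moreover have "set xs = insert (xs!p) (set (take p xs @ drop (Suc p) xs))"
    by (subst xs) auto
  ultimately show ?thesis by auto
qed

lemma acode_step:
  assumes w: "w \<in> G r (Suc j)"
  defines "p \<equiv> pos (Suc j) w"
  shows "take p w @ drop (Suc p) w \<in> G r j \<and> p < Suc j \<and> fst (w!p) = Suc j \<and>
         acode (Suc j) w = acode j (take p w @ drop (Suc p) w) @ [(Suc p, snd (w!p))]"
proof -
  have lt: "length w = Suc j" and st: "set (map fst w) = {1..Suc j}" and ct: "\<forall>x\<in>set w. snd x < r"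
    and dt: "distinct (map fst w)"
    using w by (auto simp: G_iff G_def)
  have "Suc j \<in> set (map fst w)" using st by simp
  hence "Suc j \<in> fst ` set w" by simp
  hence "pos (Suc j) w < length w \<and> fst (w ! pos (Suc j) w) = Suc j" by (rule pos_in)
  hence pl: "p < Suc j" and fp: "fst (w!p) = Suc j" using lt unfolding p_def by auto
  have "set (map fst (take p w @ drop (Suc p) w)) = set (map fst w) - {map fst w ! p}"
    using set_del_nth[OF dt, of p] pl lt by (simp add: take_map drop_map)
  hence s1: "set (map fst (take p w @ drop (Suc p) w)) = {1..j}" using st fp pl lt by auto
  have c1: "\<forall>x\<in>set (take p w @ drop (Suc p) w). snd x < r" using ct
    by (auto dest: set_take_subset[THEN subsetD] set_drop_subset[THEN subsetD])
  have G1: "take p w @ drop (Suc p) w \<in> G r j" unfolding G_iff using s1 c1 pl lt by simp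
  show ?thesis using G1 pl fp unfolding p_def by (simp add: Let_def)
qed

lemma acode_CS: "w \<in> G r n \<Longrightarrow> acode n w \<in> CS r n"
proof (induction n arbitrary: w)
  case 0 thus ?case by (simp add: CS_def)
next
  case (Suc j)
  note a = acode_step[OF Suc.prems]
  define p where "p = pos (Suc j) w"
  have IH: "acode j (take p w @ drop (Suc p) w) \<in> CS r j" using Suc.IH a unfolding p_def by blast
  have pl: "p < Suc j" using a unfolding p_def by blast
  have z: "snd (w!p) < r" using Suc.prems pl by (auto simp: G_def)
  have eq: "acode (Suc j) w = acode j (take p w @ drop (Suc p) w) @ [(Suc p, snd (w!p))]"
    using a unfolding p_def by blast
  show ?case unfolding eq CS_def
  proof (rule CollectI, rule conjI)
    show "length (acode j (take p w @ drop (Suc p) w) @ [(Suc p, snd (w ! p))]) = Suc j"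
      by (simp add: acode_len)
  next
    show "\<forall>k<Suc j. 1 \<le> fst ((acode j (take p w @ drop (Suc p) w) @ [(Suc p, snd (w ! p))]) ! k) \<and>
          fst ((acode j (take p w @ drop (Suc p) w) @ [(Suc p, snd (w ! p))]) ! k) \<le> Suc k \<and>
          snd ((acode j (take p w @ drop (Suc p) w) @ [(Suc p, snd (w ! p))]) ! k) < r"
    proof (intro allI impI)
    fix k assume k: "k < Suc j"
    show "1 \<le> fst ((acode j (take p w @ drop (Suc p) w) @ [(Suc p, snd (w ! p))]) ! k) \<and>
          fst ((acode j (take p w @ drop (Suc p) w) @ [(Suc p, snd (w ! p))]) ! k) \<le> Suc k \<and>
          snd ((acode j (take p w @ drop (Suc p) w) @ [(Suc p, snd (w ! p))]) ! k) < r"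
    proof (cases "k < j")
      case True thus ?thesis using IH unfolding CS_def by (simp add: nth_append acode_len)
    next
      case False hence "k = j" using k by simp
      thus ?thesis using pl z by (simp add: nth_append acode_len)
    qed
    qed
  qed
qed


lemma propD:
  assumes r: "1 \<le> r"
  shows "w \<in> G r n \<Longrightarrow> i < n \<Longrightarrow> fst (bd r (rev (acode n w)) ! i) \<le> Max (fst ` set (take (Suc i) w))"
proof (induction n arbitrary: w i)
  case 0 thus ?case by simp
next
  case (Suc j)
  define p where "p = pos (Suc j) w"
  define w' where "w' = take p w @ drop (Suc p) w"
  have a: "w' \<in> G r j" "p < Suc j" "fst (w!p) = Suc j"
     "acode (Suc j) w = acode j w' @ [(Suc p, snd (w!p))]"
    using acode_step[OF Suc.prems(1)] unfolding p_def w'_def by auto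
  have lw: "length w = Suc j" using Suc.prems(1) by (simp add: G_def)
  have z: "snd (w!p) < r" using Suc.prems(1) a(2) by (auto simp: G_def)
  have cs: "acode j w' \<in> CS r (length (acode j w'))" using acode_CS[OF a(1)] by (simp add: acode_len)
  have tG: "bd r (rev (acode j w')) \<in> G r j" using bd_ok[OF r cs] by (simp add: acode_len)
  define t' where "t' = bd r (rev (acode j w'))"
  have teq: "bd r (rev (acode (Suc j) w)) = bstep r (Suc j) (Suc p, snd (w!p)) t'"
    unfolding a(4) t'_def by (simp add: acode_len)
  have tG2: "bstep r (Suc j) (Suc p, snd (w!p)) t' \<in> G r (Suc j)"
    using stepA[OF tG[folded t'_def], of "Suc p" "snd (w!p)"] a(2) z by simp
  have lt': "length t' = j" using tG unfolding t'_def by (simp add: G_def)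
  show ?case
  proof (cases "i < p")
    case True
    have ij: "i < j" using True a(2) by simp
    have "bstep r (Suc j) (Suc p, snd (w!p)) t' ! i = t' ! i"
      using True ij lt' by (auto simp: bstep_def nth_append)
    moreover have "take (Suc i) w' = take (Suc i) w" unfolding w'_def using True a(2) lw
      by (simp add: min_def)
    ultimately show ?thesis using Suc.IH[OF a(1) ij] teq unfolding t'_def by simp
  next
    case False
    have "bstep r (Suc j) (Suc p, snd (w!p)) t' ! i \<in> set (bstep r (Suc j) (Suc p, snd (w!p)) t')"
      using tG2 Suc.prems(2) by (simp add: G_def)
    hence "fst (bstep r (Suc j) (Suc p, snd (w!p)) t' ! i) \<in> set (map fst (bstep r (Suc j) (Suc p, snd (w!p)) t'))"
      by simp
    hence le: "fst (bstep r (Suc j) (Suc p, snd (w!p)) t' ! i) \<le> Suc j" using tG2 by (simp add: G_def)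
    have "take (Suc i) w ! p = w ! p" using False by simp
    moreover have "p < length (take (Suc i) w)" using False Suc.prems(2) lw by simp
    ultimately have "w ! p \<in> set (take (Suc i) w)" by (metis nth_mem)
    hence "Suc j \<in> fst ` set (take (Suc i) w)" using a(3) by force
    hence "Suc j \<le> Max (fst ` set (take (Suc i) w))" by (simp add: Max_ge)
    thus ?thesis using le teq by simp
  qed
qed

theorem lemma4p4:
  fixes r n :: nat and w :: cword
  assumes "1 \<le> r" and "w \<in> G r n"
  shows "phi r n w \<in> Gf r n (minseq w)"
proof -
  have cs: "acode n w \<in> CS r (length (acode n w))" using acode_CS[OF assms(2)] by (simp add: acode_len)
  have ok: "bd r (rev (acode n w)) \<in> G r n" "bcode r n (bd r (rev (acode n w))) = acode n w"
    using bd_ok[OF assms(1) cs] by (simp_all add: acode_len)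
  hence im: "Acode n w \<in> Bcode r n ` G r n" unfolding Acode_def Bcode_def by (metis image_eqI)
  have tG: "phi r n w \<in> G r n" unfolding phi_def using im by (rule inv_into_into)
  have "Bcode r n (phi r n w) = Acode n w" unfolding phi_def using im by (rule f_inv_into_f)
  hence "bcode r n (phi r n w) = acode n w" by (simp add: Acode_def Bcode_def)
  hence eq: "phi r n w = bd r (rev (acode n w))" using bd_inj[OF tG] by simp
  show ?thesis unfolding Gf_def
  proof (intro CollectI conjI ballI)
    show "phi r n w \<in> G r n" by (rule tG)
  next
    fix i assume i: "i \<in> {1..n}"
    have "fst (bd r (rev (acode n w)) ! (i - 1)) \<le> Max (fst ` set (take (Suc (i - 1)) w))"
    proof -
      have "i - 1 < n" "Suc (i - 1) = i" using i by auto
      thus ?thesis using propD[OF assms(1) assms(2), of "i - 1"] by simp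
    qed
    thus "fst (phi r n w ! (i - 1)) \<le> minseq w i" using i eq unfolding minseq_def by simp
  qed
qed

end
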